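(* Let $1\leq\alpha\leq\theta<\omega_1$ and let $X,Y$ be $\mathbf{\Sigma}^0_\alpha$-isomorphic topological spaces. If the difference hierarchy $\{D_\beta(\mathbf{\Sigma}^0_\theta(X))\}_{\beta<\omega_1}$ does not collapse, then the difference hierarchy $\{D_\beta(\mathbf{\Sigma}^0_\theta(Y))\}_{\beta<\omega_1}$ does not collapse.
   Context: For a space $X$: $\mathbf{\Sigma}^0_0(X)=\{\emptyset\}$; $\mathbf{\Sigma}^0_1(X)$ the open sets; $\mathbf{\Sigma}^0_2(X)$ the countable unions of sets $U\setminus V$ with $U,V$ open; for $2<\alpha<\omega_1$, $\mathbf{\Sigma}^0_\alpha(X)$ the countable unions of complements of sets in $\bigcup_{\beta<\alpha}\mathbf{\Sigma}^0_\beta(X)$. An ordinal $\alpha=\lambda+n$ ($\lambda$ zero or limit, $n<\omega$) is even if $n$ is even and odd otherwise; $r(\alpha)=0$ if $\alpha$ is even, $1$ otherwise. $D_\beta(\{A_\gamma\}_{\gamma<\beta})=\bigcup\{A_\gamma\setminus\bigcup_{\delta<\gamma}A_\delta\mid\gamma<\beta,\ r(\gamma)\neq r(\beta)\}$, and $D_\beta(\mathcal{L})$ is the set of all such sets with all $A_\gamma\in\mathcal{L}$. The difference hierarchy $\{D_\beta(\mathbf{\Sigma}^0_\theta(X))\}_{\beta<\omega_1}$ collapses if for some $\beta<\omega_1$ the class $D_\beta(\mathbf{\Sigma}^0_\theta(X))$ coincides with the class of complements $\{X\setminus A\mid A\in D_\beta(\mathbf{\Sigma}^0_\theta(X))\}$.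 $X$ and $Y$ are $\mathbf{\Sigma}^0_\alpha$-isomorphic if there is a bijection $f:X\to Y$ such that $f^{-1}(A)\in\mathbf{\Sigma}^0_\alpha(X)$ for all $A\in\mathbf{\Sigma}^0_\alpha(Y)$ and $f(B)\in\mathbf{\Sigma}^0_\alpha(Y)$ for all $B\in\mathbf{\Sigma}^0_\alpha(X)$. *)

theory Defs
  imports "HOL-Analysis.Analysis"
begin

text \<open>Countable ordinals (ordinals below omega_1) are represented by well-orders
  on subsets of nat; comparison is ordLess / ordLeq (isomorphism-invariant).
  The order type of a well-order r is finite k iff Field r is finite of card k.\<close>

text \<open>Parity of an ordinal lambda+n: the elements with only finitely many strict
  successors are exactly the last n ones.\<close>
definition ord_even :: "'i rel \<Rightarrow> bool" where
  "ord_even r \<longleftrightarrow> even (card {x \<in> Field r. finite (aboveS r x)})"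

inductive borel_sigma :: "'a topology \<Rightarrow> nat rel \<Rightarrow> 'a set \<Rightarrow> bool"
  for X :: "'a topology" where
  sigma0: "Well_order r \<Longrightarrow> Field r = {} \<Longrightarrow> borel_sigma X r {}"
| sigma1: "Well_order r \<Longrightarrow> card (Field r) = 1 \<Longrightarrow> openin X A \<Longrightarrow> borel_sigma X r A"
| sigma2: "Well_order r \<Longrightarrow> finite (Field r) \<Longrightarrow> card (Field r) = 2 \<Longrightarrow> countable F \<Longrightarrow>
           (\<forall>C\<in>F. \<exists>U V. openin X U \<and> openin X V \<and> C = U - V) \<Longrightarrow> borel_sigma X r (\<Union>F)"
| sigmaN: "Well_order r \<Longrightarrow> (infinite (Field r) \<or> card (Field r) \<ge> 3) \<Longrightarrow> countable F \<Longrightarrow>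
           (\<forall>C\<in>F. \<exists>B s. (s, r) \<in> ordLess \<and> borel_sigma X s B \<and> C = topspace X - B) \<Longrightarrow>
           borel_sigma X r (\<Union>F)"

definition Sigma0 :: "'a topology \<Rightarrow> nat rel \<Rightarrow> 'a set set" where
  "Sigma0 X r = {A. borel_sigma X r A}"

text \<open>D_b({A_g}_{g<b}): the ordinals g<b are the elements x of Field b
  (g = order type of the initial segment below x).\<close>
definition diff_op :: "nat rel \<Rightarrow> (nat \<Rightarrow> 'a set) \<Rightarrow> 'a set" where
  "diff_op b A = \<Union>{A x - \<Union>{A y | y. y \<in> underS b x} | x.
      x \<in> Field b \<and> ord_even (Restr b (underS b x)) \<noteq> ord_even b}"

definition diff_class :: "nat rel \<Rightarrow> 'a set set \<Rightarrow> 'a set set" where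
  "diff_class b L = {diff_op b A | A. \<forall>x\<in>Field b. A x \<in> L}"

definition dual_class :: "'a topology \<Rightarrow> 'a set set \<Rightarrow> 'a set set" where
  "dual_class X L = {topspace X - S | S. S \<in> L}"

definition diff_hierarchy_collapses :: "'a topology \<Rightarrow> nat rel \<Rightarrow> bool" where
  "diff_hierarchy_collapses X t \<longleftrightarrow>
     (\<exists>b :: nat rel. Well_order b \<and>
        diff_class b (Sigma0 X t) = dual_class X (diff_class b (Sigma0 X t)))"

definition sigma_isomorphic :: "nat rel \<Rightarrow> 'a topology \<Rightarrow> 'b topology \<Rightarrow> bool" where
  "sigma_isomorphic a X Y \<longleftrightarrow>
     (\<exists>f. bij_betw f (topspace X) (topspace Y) \<and>
          (\<forall>A\<in>Sigma0 Y a. {x \<in> topspace X. f x \<in> A} \<in> Sigma0 X a) \<and>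
          (\<forall>B\<in>Sigma0 X a. f ` B \<in> Sigma0 Y a))"

end

theory Submission
  imports Defs
begin

lemma WO_ordLess: "(r, r') \<in> ordLess \<Longrightarrow> Well_order r \<and> Well_order r'"
  using ordLeq_Well_order_simp[OF ordLess_imp_ordLeq] .
lemma WO_ordLeq: "(r, r') \<in> ordLeq \<Longrightarrow> Well_order r \<and> Well_order r'"
  using ordLeq_Well_order_simp .
lemma WO_ordIso: "(r, r') \<in> ordIso \<Longrightarrow> Well_order r \<and> Well_order r'"
  using ordLeq_Well_order_simp[OF ordIso_imp_ordLeq] .

lemma L1:
  assumes "(r, r') \<in> ordLeq" "finite (Field r')"
  shows "finite (Field r) \<and> card (Field r) \<le> card (Field r')"
proof -
  have "(card_of (Field r), card_of (Field r')) \<in> ordLeq" using card_of_mono2[OF assms(1)] .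
  then have "\<exists>f. inj_on f (Field r) \<and> f ` Field r \<subseteq> Field r'"
    by (simp only: card_of_ordLeq[symmetric])
  then obtain f where i: "inj_on f (Field r)" and s: "f ` Field r \<subseteq> Field r'"
    by (elim exE conjE)
  have fi: "finite (f ` Field r)" by (rule finite_subset[OF s assms(2)])
  have "finite (Field r)" by (rule finite_imageD[OF fi i])
  moreover have "card (Field r) \<le> card (Field r')" by (rule card_inj_on_le[OF i s assms(2)])
  ultimately show ?thesis by (rule conjI)
qed

lemma L3:
  assumes "(r, r') \<in> ordIso"
  shows "finite (Field r) = finite (Field r') \<and> card (Field r) = card (Field r')"
proof -
  have "(card_of (Field r), card_of (Field r')) \<in> ordIso" using card_of_cong[OF assms] .
  then obtain f where b: "bij_betw f (Field r) (Field r')"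
    using card_of_ordIso by blast
  show ?thesis using bij_betw_finite[OF b] bij_betw_same_card[OF b] by (rule conjI)
qed

lemma L2:
  assumes "(r, r') \<in> ordLess" "finite (Field r')"
  shows "card (Field r) < card (Field r')"
proof -
  have w: "Well_order r" "Well_order r'" using WO_ordLess[OF assms(1)] by auto
  then obtain x where x: "x \<in> Field r'" "(r, Restr r' (underS r' x)) \<in> ordIso"
    using ordLess_iff_ordIso_Restr[OF w(2) w(1)] assms(1) by blast
  have "card (Field r) = card (Field (Restr r' (underS r' x)))" using L3[OF x(2)] by simp
  also have "\<dots> \<le> card (underS r' x)"
  proof (rule card_mono)
    show "finite (underS r' x)" using underS_Field2[OF x(1)] assms(2) finite_subset by blast
    show "Field (Restr r' (underS r' x)) \<subseteq> underS r' x" by (rule Field_Restr_subset)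
  qed
  also have "\<dots> < card (Field r')"
    by (rule psubset_card_mono[OF assms(2) underS_Field2[OF x(1)]])
  finally show ?thesis .
qed

lemma L4:
  assumes "Well_order r" "Well_order r'" "finite (Field r)"
    "infinite (Field r') \<or> card (Field r) < card (Field r')"
  shows "(r, r') \<in> ordLess"
proof (rule ccontr)
  assume "(r, r') \<notin> ordLess"
  then have "(r', r) \<in> ordLeq" using not_ordLeq_iff_ordLess[OF assms(1,2)] by blast
  then have "finite (Field r') \<and> card (Field r') \<le> card (Field r)" using L1 assms(3) by blast
  then show False using assms(4) by linarith
qed


lemma WO_sig: "borel_sigma X r A \<Longrightarrow> Well_order r"
  by (erule borel_sigma.cases) simp_all

lemma Sub: "borel_sigma X r A \<Longrightarrow> A \<subseteq> topspace X"
proof (induction rule: borel_sigma.induct)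
  case (sigma0 r) then show ?case by simp
next
  case (sigma1 r A) then show ?case by (simp add: openin_subset)
next
  case (sigma2 r F) then show ?case using openin_subset by fastforce
next
  case (sigmaN r F) then show ?case by fastforce
qed

lemma Empty: "Well_order r \<Longrightarrow> borel_sigma X r {}"
proof -
  assume w: "Well_order r"
  consider "Field r = {}" | "finite (Field r)" "card (Field r) = 1"
    | "finite (Field r)" "card (Field r) = 2" | "infinite (Field r) \<or> card (Field r) \<ge> 3"
  proof (cases "Field r = {}")
    case False
    show ?thesis
    proof (cases "finite (Field r)")
      case True
      have "card (Field r) \<noteq> 0" using True False by simp
      then have "card (Field r) = 1 \<or> card (Field r) = 2 \<or> card (Field r) \<ge> 3" by linarith
      then show ?thesis using that True by blast
    qed (use that in blast)
  qed (use that in blast)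
  then show ?thesis
  proof cases
    case 1 then show ?thesis using w by (rule borel_sigma.sigma0[rotated])
  next
    case 2 then show ?thesis using w by (intro borel_sigma.sigma1) auto
  next
    case 3 then show ?thesis using w borel_sigma.sigma2[of r "{}" X] by simp
  next
    case 4 then show ?thesis using w borel_sigma.sigmaN[of r "{}" X] by simp
  qed
qed

lemma Inv: "borel_sigma X r A \<Longrightarrow> (r, r') \<in> ordIso \<Longrightarrow> borel_sigma X r' A"
proof (induction arbitrary: r' rule: borel_sigma.induct)
  case (sigma0 r)
  then show ?case using Empty WO_ordIso by blast
next
  case (sigma1 r A)
  have "Well_order r'" using WO_ordIso[OF sigma1.prems] by simp
  moreover have "card (Field r') = 1" using L3[OF sigma1.prems] sigma1.hyps by simp
  ultimately show ?case using sigma1.hyps by (intro borel_sigma.sigma1) auto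
next
  case (sigma2 r F)
  have "Well_order r'" using WO_ordIso[OF sigma2.prems] by simp
  moreover have "finite (Field r')" "card (Field r') = 2" using L3[OF sigma2.prems] sigma2.hyps by simp_all
  ultimately show ?case using sigma2.hyps by (intro borel_sigma.sigma2) auto
next
  case (sigmaN r F)
  have w: "Well_order r'" using WO_ordIso[OF sigmaN.prems] by simp
  have c: "infinite (Field r') \<or> card (Field r') \<ge> 3" using L3[OF sigmaN.prems] sigmaN.hyps(2) by simp
  have "\<forall>C\<in>F. \<exists>B s. (s, r') \<in> ordLess \<and> borel_sigma X s B \<and> C = topspace X - B"
  proof
    fix C assume "C \<in> F"
    then obtain B s where "(s, r) \<in> ordLess" "borel_sigma X s B" "C = topspace X - B"
      using sigmaN.IH by blast
    moreover have "(s, r') \<in> ordLess" using ordLess_ordIso_trans[OF \<open>(s, r) \<in> ordLess\<close> sigmaN.prems] .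
    ultimately show "\<exists>B s. (s, r') \<in> ordLess \<and> borel_sigma X s B \<and> C = topspace X - B" by blast
  qed
  then show ?case using w c sigmaN.hyps(3) by (intro borel_sigma.sigmaN) auto
qed

lemma Open_inv: "borel_sigma X r A \<Longrightarrow> finite (Field r) \<Longrightarrow> card (Field r) = 1 \<Longrightarrow> openin X A"
  by (erule borel_sigma.cases) auto


lemma Sigma2_diff:
  assumes "Well_order s" "finite (Field s)" "card (Field s) = 2" "openin X U" "openin X V"
  shows "borel_sigma X s (U - V)"
proof -
  have "borel_sigma X s (\<Union>{U - V})"
    using assms by (intro borel_sigma.sigma2) auto
  then show ?thesis by simp
qed

lemma Sigma2_cl_un:
  assumes "Well_order s" "finite (Field s)" "card (Field s) = 2" "openin X U" "openin X V"
  shows "borel_sigma X s ((topspace X - U) \<union> V)"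
proof -
  have "borel_sigma X s (\<Union>{topspace X - U, V - {}})"
    using assms by (intro borel_sigma.sigma2) auto
  then show ?thesis by simp
qed

lemma r2: "Well_order (natLeq_on 2)" "finite (Field (natLeq_on 2))" "card (Field (natLeq_on 2)) = 2"
  using natLeq_on_Well_order[of 2] by (simp_all add: Field_natLeq_on)

lemma Mono_less:
  assumes "(s, a) \<in> ordLess" "borel_sigma X s B"
  shows "borel_sigma X a B"
  using assms(2)
proof (cases rule: borel_sigma.cases)
  case (sigma0)
  then show ?thesis using Empty WO_ordLess[OF assms(1)] by blast
next
  case sigma1
  have wa: "Well_order a" using WO_ordLess[OF assms(1)] by simp
  have ca: "infinite (Field a) \<or> card (Field a) > 1" using L2[OF assms(1)] sigma1 by auto
  show ?thesis
  proof (cases "finite (Field a) \<and> card (Field a) = 2")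
    case True
    then show ?thesis using Sigma2_diff[OF wa _ _ sigma1(3), of "{}"] by simp
  next
    case False
    then have ca3: "infinite (Field a) \<or> card (Field a) \<ge> 3" using ca by auto
    have lt: "(natLeq_on 2, a) \<in> ordLess"
      by (rule L4[OF r2(1) wa r2(2)]) (use ca3 r2(3) in auto)
    have b2: "borel_sigma X (natLeq_on 2) (topspace X - B)"
      using Sigma2_diff[OF r2 openin_topspace sigma1(3)] .
    have "borel_sigma X a (\<Union>{topspace X - (topspace X - B)})"
      apply (rule borel_sigma.sigmaN[OF wa ca3])
      using lt b2 by auto
    moreover have "topspace X - (topspace X - B) = B" using openin_subset[OF sigma1(3)] by blast
    ultimately show ?thesis by simp
  qed
next
  case (sigma2 F)
  have wa: "Well_order a" using WO_ordLess[OF assms(1)] by simp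
  have ca: "infinite (Field a) \<or> card (Field a) \<ge> 3" using L2[OF assms(1)] sigma2(3,4) by auto
  show ?thesis unfolding \<open>B = \<Union>F\<close>
  proof (rule borel_sigma.sigmaN[OF wa ca \<open>countable F\<close>], rule ballI)
    fix C assume "C \<in> F"
    then obtain U V where uv: "openin X U" "openin X V" "C = U - V" using sigma2(6) by blast
    have "C = topspace X - ((topspace X - U) \<union> V)" using uv openin_subset[OF uv(1)] by blast
    moreover have "borel_sigma X s ((topspace X - U) \<union> V)"
      using Sigma2_cl_un[OF sigma2(2,3,4) uv(1,2)] .
    ultimately show "\<exists>B s. (s, a) \<in> ordLess \<and> borel_sigma X s B \<and> C = topspace X - B"
      using assms(1) by blast
  qed
next
  case (sigmaN F)
  have wa: "Well_order a" using WO_ordLess[OF assms(1)] by simp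
  have l1: "finite (Field a) \<Longrightarrow> finite (Field s) \<and> card (Field s) \<le> card (Field a)"
    using L1[OF ordLess_imp_ordLeq[OF assms(1)]] by blast
  have ca: "infinite (Field a) \<or> card (Field a) \<ge> 3" using l1 sigmaN(3) by auto
  show ?thesis unfolding \<open>B = \<Union>F\<close>
  proof (rule borel_sigma.sigmaN[OF wa ca \<open>countable F\<close>], rule ballI)
    fix C assume "C \<in> F"
    then obtain B' s' where "(s', s) \<in> ordLess" "borel_sigma X s' B'" "C = topspace X - B'"
      using sigmaN(5) by blast
    then show "\<exists>B s. (s, a) \<in> ordLess \<and> borel_sigma X s B \<and> C = topspace X - B"
      using ordLess_transitive[OF _ assms(1)] by blast
  qed
qed


locale transfer =
  fixes a :: "nat rel" and X :: "'a topology" and Y :: "'b topology" and f :: "'a \<Rightarrow> 'b"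
  assumes wa: "Well_order a" and na: "Field a \<noteq> {}"
    and inj: "inj_on f (topspace X)" and img: "f ` topspace X = topspace Y"
    and P: "\<And>B. borel_sigma X a B \<Longrightarrow> borel_sigma Y a (f ` B)"
begin

lemma iso_case:
  assumes "borel_sigma X t B" "(a, t) \<in> ordIso"
  shows "borel_sigma Y t (f ` B)"
proof -
  have "borel_sigma X a B" using Inv[OF assms(1) ordIso_symmetric[OF assms(2)]] .
  then show ?thesis using Inv[OF P assms(2)] by blast
qed

lemma diff_img: "U \<subseteq> topspace X \<Longrightarrow> V \<subseteq> topspace X \<Longrightarrow> f ` (U - V) = f ` U - f ` V"
  using inj_on_image_set_diff[OF inj] by blast

lemma less_case:
  assumes "borel_sigma X t B" "(a, t) \<in> ordLess"
  shows "borel_sigma Y t (f ` B)"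
  using assms
proof (induction rule: borel_sigma.induct)
  case (sigma0 r)
  show ?case using Empty[OF sigma0.hyps(1)] by simp
next
  case (sigma1 r A)
  have fr: "finite (Field r)" using sigma1.hyps(2) by (intro card_ge_0_finite) simp
  have "card (Field a) < 1" using L2[OF sigma1.prems fr] sigma1.hyps(2) by simp
  moreover have "finite (Field a)" using L1[OF ordLess_imp_ordLeq[OF sigma1.prems] fr] by simp
  ultimately have False using na by simp
  then show ?case ..
next
  case (sigma2 r F)
  have fa: "finite (Field a)" using L1[OF ordLess_imp_ordLeq[OF sigma2.prems]] sigma2.hyps(2) by simp
  have "card (Field a) < 2" using L2[OF sigma2.prems] sigma2.hyps(2,3) by simp
  moreover have "card (Field a) \<noteq> 0" using fa na by simp
  ultimately have ca: "card (Field a) = 1" by linarith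
  have op: "openin Y (f ` U)" if "openin X U" for U
    using Open_inv[OF P[OF borel_sigma.sigma1[OF wa ca that]] fa ca] .
  have "borel_sigma Y r (\<Union>((`) f ` F))"
  proof (rule borel_sigma.sigma2[OF sigma2.hyps(1,2,3)])
    show "countable ((`) f ` F)" using sigma2.hyps(4) by simp
    show "\<forall>C\<in>(`) f ` F. \<exists>U V. openin Y U \<and> openin Y V \<and> C = U - V"
    proof
      fix C assume "C \<in> (`) f ` F"
      then obtain C0 where "C0 \<in> F" "C = f ` C0" by blast
      then obtain U V where uv: "openin X U" "openin X V" "C0 = U - V" using sigma2.hyps(5) by blast
      have "C = f ` U - f ` V" using diff_img[OF openin_subset[OF uv(1)] openin_subset[OF uv(2)]]
        \<open>C = f ` C0\<close> uv(3) by simp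
      then show "\<exists>U V. openin Y U \<and> openin Y V \<and> C = U - V" using op uv(1,2) by blast
    qed
  qed
  then show ?case by (simp add: image_Union)
next
  case (sigmaN r F)
  have "borel_sigma Y r (\<Union>((`) f ` F))"
  proof (rule borel_sigma.sigmaN[OF sigmaN.hyps(1,2)])
    show "countable ((`) f ` F)" using sigmaN.hyps(3) by simp
    show "\<forall>C\<in>(`) f ` F. \<exists>B s. (s, r) \<in> ordLess \<and> borel_sigma Y s B \<and> C = topspace Y - B"
    proof
      fix C assume "C \<in> (`) f ` F"
      then obtain C0 where "C0 \<in> F" "C = f ` C0" by blast
      then obtain B s where bs: "(s, r) \<in> ordLess" "borel_sigma X s B" "C0 = topspace X - B"
        and IH: "(a, s) \<in> ordLess \<Longrightarrow> borel_sigma Y s (f ` B)"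
        using sigmaN.IH by blast
      have ws: "Well_order s" using WO_ordLess[OF bs(1)] by simp
      have Cd: "C = topspace Y - f ` B"
        using diff_img[OF subset_refl Sub[OF bs(2)]] \<open>C = f ` C0\<close> bs(3) img by simp
      show "\<exists>B s. (s, r) \<in> ordLess \<and> borel_sigma Y s B \<and> C = topspace Y - B"
      proof (cases "(a, s) \<in> ordLeq")
        case True
        then have "(a, s) \<in> ordLess \<or> (a, s) \<in> ordIso" using ordLeq_iff_ordLess_or_ordIso by blast
        then have "borel_sigma Y s (f ` B)" using IH iso_case[OF bs(2)] by blast
        then show ?thesis using bs(1) Cd by blast
      next
        case False
        then have sa: "(s, a) \<in> ordLess" using not_ordLeq_iff_ordLess[OF ws wa] by blast
        have "borel_sigma Y a (f ` B)" using P[OF Mono_less[OF sa bs(2)]] .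
        then show ?thesis using sigmaN.prems Cd by blast
      qed
    qed
  qed
  then show ?case by (simp add: image_Union)
qed

lemma main:
  assumes "borel_sigma X t B" "(a, t) \<in> ordLeq"
  shows "borel_sigma Y t (f ` B)"
  using assms ordLeq_iff_ordLess_or_ordIso less_case iso_case by blast

end


lemma diff_op_alt: "diff_op b A = (\<Union>x\<in>{x. x \<in> Field b \<and> ord_even (Restr b (underS b x)) \<noteq> ord_even b}.
    A x - (\<Union>y\<in>underS b x. A y))"
  unfolding diff_op_def by blast

lemma diff_op_cong: "(\<And>x. x \<in> Field b \<Longrightarrow> A x = A' x) \<Longrightarrow> diff_op b A = diff_op b A'"
  unfolding diff_op_alt
  by (intro SUP_cong refl arg_cong2[where f = minus]) (auto dest: underS_Field)

lemma diff_op_img: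
  assumes inj: "inj_on f S" and sub: "\<And>x. x \<in> Field b \<Longrightarrow> A x \<subseteq> S"
  shows "f ` diff_op b A = diff_op b (\<lambda>x. f ` A x)"
proof -
  have e: "f ` (A x - (\<Union>y\<in>underS b x. A y)) = f ` A x - (\<Union>y\<in>underS b x. f ` A y)"
    if "x \<in> Field b" for x
  proof -
    have s1: "A x \<subseteq> S" using sub that .
    have s2: "(\<Union>y\<in>underS b x. A y) \<subseteq> S" using sub underS_Field[of _ b x] by blast
    have "f ` (A x - (\<Union>y\<in>underS b x. A y)) = f ` A x - f ` (\<Union>y\<in>underS b x. A y)"
      using inj_on_image_set_diff[OF inj _ s2] s1 by blast
    then show ?thesis by (simp add: image_UN)
  qed
  show ?thesis unfolding diff_op_alt image_UN
    by (rule SUP_cong[OF refl]) (use e in blast)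
qed

lemma diff_class_img:
  assumes inj: "inj_on f S" and L: "L \<subseteq> Pow S"
  shows "diff_class b ((`) f ` L) = (`) f ` diff_class b L"
proof
  show "(`) f ` diff_class b L \<subseteq> diff_class b ((`) f ` L)"
  proof
    fix D assume "D \<in> (`) f ` diff_class b L"
    then obtain A where A: "\<forall>x\<in>Field b. A x \<in> L" "D = f ` diff_op b A"
      unfolding diff_class_def by blast
    have "D = diff_op b (\<lambda>x. f ` A x)" using A diff_op_img[OF inj, of b A] L by blast
    then show "D \<in> diff_class b ((`) f ` L)" using A(1) unfolding diff_class_def by blast
  qed
next
  show "diff_class b ((`) f ` L) \<subseteq> (`) f ` diff_class b L"
  proof
    fix D assume "D \<in> diff_class b ((`) f ` L)"
    then obtain A' where A': "\<forall>x\<in>Field b. A' x \<in> (`) f ` L" "D = diff_op b A'"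
      unfolding diff_class_def by blast
    define A where "A x = (SOME A0. A0 \<in> L \<and> A' x = f ` A0)" for x
    have Ax: "A x \<in> L \<and> A' x = f ` A x" if "x \<in> Field b" for x
    proof -
      have "\<exists>A0. A0 \<in> L \<and> A' x = f ` A0" using A' that by blast
      then show ?thesis unfolding A_def by (rule someI_ex)
    qed
    have "D = diff_op b (\<lambda>x. f ` A x)" using A'(2) diff_op_cong[of b A' "\<lambda>x. f ` A x"] Ax by blast
    also have "\<dots> = f ` diff_op b A" using diff_op_img[OF inj, of b A] Ax L by blast
    finally show "D \<in> (`) f ` diff_class b L" using Ax unfolding diff_class_def by blast
  qed
qed

lemma dual_alt: "dual_class X M = (\<lambda>S. topspace X - S) ` M"
  unfolding dual_class_def by blast

lemma dual_img:
  assumes inj: "inj_on f (topspace X)" and img: "f ` topspace X = topspace Y" and M: "M \<subseteq> Pow (topspace X)"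
  shows "dual_class Y ((`) f ` M) = (`) f ` dual_class X M"
proof -
  have e: "f ` (topspace X - S) = topspace Y - f ` S" if "S \<in> M" for S
  proof -
    have "S \<subseteq> topspace X" using M that by blast
    moreover have "topspace X - S \<subseteq> topspace X" by blast
    ultimately show ?thesis using inj_on_image_set_diff[OF inj _ \<open>S \<subseteq> topspace X\<close>] img by simp
  qed
  show ?thesis unfolding dual_alt image_image using e by (intro image_cong refl) simp
qed

lemma diff_class_sub: "L \<subseteq> Pow S \<Longrightarrow> diff_class b L \<subseteq> Pow S"
proof
  fix D assume L: "L \<subseteq> Pow S" and "D \<in> diff_class b L"
  then obtain A where A: "\<forall>x\<in>Field b. A x \<in> L" "D = diff_op b A"
    unfolding diff_class_def by blast
  have "D \<subseteq> (\<Union>x\<in>Field b. A x)" unfolding A(2) diff_op_alt by blast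
  also have "\<dots> \<subseteq> S" using A(1) L by blast
  finally show "D \<in> Pow S" by simp
qed


lemma Sigma_transfer:
  assumes wa: "Well_order a" and na: "Field a \<noteq> {}" and at: "(a, t) \<in> ordLeq"
    and bij: "bij_betw f (topspace X) (topspace Y)"
    and pre: "\<forall>A\<in>Sigma0 Y a. {x \<in> topspace X. f x \<in> A} \<in> Sigma0 X a"
    and fw: "\<forall>B\<in>Sigma0 X a. f ` B \<in> Sigma0 Y a"
  shows "Sigma0 Y t = (`) f ` Sigma0 X t"
proof -
  define g where "g = inv_into (topspace X) f"
  have inj: "inj_on f (topspace X)" and img: "f ` topspace X = topspace Y"
    using bij unfolding bij_betw_def by auto
  have bijg: "bij_betw g (topspace Y) (topspace X)" unfolding g_def by (rule bij_betw_inv_into[OF bij])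
  have injg: "inj_on g (topspace Y)" and imgg: "g ` topspace Y = topspace X"
    using bijg unfolding bij_betw_def by auto
  have gB: "g ` B = {x \<in> topspace X. f x \<in> B}" if "B \<subseteq> topspace Y" for B
  proof
    show "g ` B \<subseteq> {x \<in> topspace X. f x \<in> B}"
    proof
      fix x assume "x \<in> g ` B"
      then obtain y where y: "y \<in> B" "x = g y" by blast
      have yY: "y \<in> topspace Y" using y(1) that by blast
      have "x \<in> topspace X" using y(2) yY imgg by blast
      moreover have "f x = y" unfolding y(2) g_def using f_inv_into_f[of y f "topspace X"] yY img by simp
      ultimately show "x \<in> {x \<in> topspace X. f x \<in> B}" using y(1) by simp
    qed
  next
    show "{x \<in> topspace X. f x \<in> B} \<subseteq> g ` B"
    proof
      fix x assume x: "x \<in> {x \<in> topspace X. f x \<in> B}"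
      then have "g (f x) = x" unfolding g_def using inv_into_f_f[OF inj] by simp
      then show "x \<in> g ` B" using x by (metis (no_types, lifting) image_eqI mem_Collect_eq)
    qed
  qed
  interpret T1: transfer a X Y f
    by unfold_locales (use wa na inj img fw in \<open>auto simp: Sigma0_def\<close>)
  interpret T2: transfer a Y X g
  proof unfold_locales
    fix B assume "borel_sigma Y a B"
    then have "{x \<in> topspace X. f x \<in> B} \<in> Sigma0 X a" using pre by (simp add: Sigma0_def)
    then show "borel_sigma X a (g ` B)" using gB[OF Sub[OF \<open>borel_sigma Y a B\<close>]] by (simp add: Sigma0_def)
  qed (use wa na injg imgg in auto)
  show ?thesis
  proof
    show "(`) f ` Sigma0 X t \<subseteq> Sigma0 Y t" using T1.main at by (auto simp: Sigma0_def)
  next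
    show "Sigma0 Y t \<subseteq> (`) f ` Sigma0 X t"
    proof
      fix C assume C: "C \<in> Sigma0 Y t"
      then have b: "borel_sigma Y t C" by (simp add: Sigma0_def)
      have "g ` C \<in> Sigma0 X t" using T2.main[OF b at] by (simp add: Sigma0_def)
      moreover have "f ` (g ` C) = C"
      proof -
        have "C \<subseteq> topspace Y" using Sub[OF b] .
        then show ?thesis unfolding g_def image_image using f_inv_into_f[of _ f "topspace X"] img
          by (simp add: subset_iff image_iff)
      qed
      ultimately show "C \<in> (`) f ` Sigma0 X t" by (metis image_eqI)
    qed
  qed
qed

theorem lemma4p4:
  fixes a t :: "nat rel" and X :: "'a topology" and Y :: "'b topology"
  assumes "Well_order a" and "Well_order t"
    and "Field a \<noteq> {}"
    and "(a, t) \<in> ordLeq"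
    and "sigma_isomorphic a X Y"
    and "\<not> diff_hierarchy_collapses X t"
  shows "\<not> diff_hierarchy_collapses Y t"
proof
  assume "diff_hierarchy_collapses Y t"
  then obtain b :: "nat rel" where wb: "Well_order b"
    and eq: "diff_class b (Sigma0 Y t) = dual_class Y (diff_class b (Sigma0 Y t))"
    unfolding diff_hierarchy_collapses_def by blast
  obtain f where bij: "bij_betw f (topspace X) (topspace Y)"
    and pre: "\<forall>A\<in>Sigma0 Y a. {x \<in> topspace X. f x \<in> A} \<in> Sigma0 X a"
    and fw: "\<forall>B\<in>Sigma0 X a. f ` B \<in> Sigma0 Y a"
    using assms(5) unfolding sigma_isomorphic_def by blast
  have inj: "inj_on f (topspace X)" and img: "f ` topspace X = topspace Y"
    using bij unfolding bij_betw_def by auto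
  have SY: "Sigma0 Y t = (`) f ` Sigma0 X t"
    by (rule Sigma_transfer[OF assms(1,3,4) bij pre fw])
  have LX: "Sigma0 X t \<subseteq> Pow (topspace X)" using Sub by (auto simp: Sigma0_def)
  define DX where "DX = diff_class b (Sigma0 X t)"
  have DXs: "DX \<subseteq> Pow (topspace X)" unfolding DX_def by (rule diff_class_sub[OF LX])
  have DXd: "dual_class X DX \<subseteq> Pow (topspace X)" unfolding dual_class_def by blast
  have DY: "diff_class b (Sigma0 Y t) = (`) f ` DX"
    unfolding SY DX_def by (rule diff_class_img[OF inj LX])
  have "(`) f ` DX = (`) f ` dual_class X DX"
    using eq unfolding DY dual_img[OF inj img DXs] .
  then have "DX = dual_class X DX"
    using inj_on_image_eq_iff[OF inj_on_image_Pow[OF inj] DXs DXd] by simp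
  then have "diff_hierarchy_collapses X t"
    unfolding diff_hierarchy_collapses_def DX_def using wb by blast
  then show False using assms(6) by simp
qed

end
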